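(* Let $n\ge 1$ be an integer and $p\ge 3$ a prime. Let $S\subset(\mathbb{Z}_{\ge 0})^n\setminus\{0\}$ be a finite set with $|S|\le \frac12 p^n-1$ such that for every $\alpha=(\alpha_1,\dots,\alpha_n)\in S$ some coordinate $\alpha_i$ is not divisible by $p$. Let $r=\sqrt{\frac14(n-1)+\left(\frac{p-2}{2p}\right)^2}$. Then every multivariate trigonometric polynomial with spectrum $S$, i.e. every function $f\colon (S^1)^n\to\mathbb{R}$ of the form $$f(t_1,\dots,t_n)=\sum_{\alpha\in S}\Big(a_\alpha\cos\big(2\pi\textstyle\sum_i\alpha_it_i\big)+b_\alpha\sin\big(2\pi\textstyle\sum_i\alpha_it_i\big)\Big),\qquad a_\alpha,b_\alpha\in\mathbb{R},$$ has a zero on every closed geodesic ball of radius $r$ in $(S^1)^n$.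
   Context: $S^1=[0,1]/(0\sim1)$, and the torus $(S^1)^n$ is obtained from the cube $[0,1]^n$ by gluing opposite facets without a twist; it carries the quotient ($\ell_2$) metric inherited from the Euclidean metric on $[0,1]^n$, i.e. $\mathrm{dist}(s,t)=\big(\sum_i \min(|s_i-t_i|,1-|s_i-t_i|)^2\big)^{1/2}$ for representatives in $[0,1)$. A closed geodesic ball of radius $r$ is a set $\{y:\mathrm{dist}(x,y)\le r\}$. *)

theory Defs
  imports "HOL-Analysis.Analysis"
begin

text \<open>Points of the torus (S^1)^n are represented by functions t :: nat => real whose
  first n coordinates lie in [0,1) (coordinates >= n are ignored).  The quotient l2 metric:\<close>
definition torus_dist :: "nat \<Rightarrow> (nat \<Rightarrow> real) \<Rightarrow> (nat \<Rightarrow> real) \<Rightarrow> real" where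
  "torus_dist n s t = sqrt (\<Sum>i<n. (min \<bar>s i - t i\<bar> (1 - \<bar>s i - t i\<bar>))^2)"

definition torus_pt :: "nat \<Rightarrow> (nat \<Rightarrow> real) \<Rightarrow> bool" where
  "torus_pt n t \<longleftrightarrow> (\<forall>i<n. 0 \<le> t i \<and> t i < 1)"

text \<open>Trigonometric polynomial with spectrum S; multi-indices are nat lists of length n.\<close>
definition trig_poly :: "nat \<Rightarrow> nat list set \<Rightarrow> (nat list \<Rightarrow> real) \<Rightarrow> (nat list \<Rightarrow> real)
    \<Rightarrow> (nat \<Rightarrow> real) \<Rightarrow> real" where
  "trig_poly n S a b t = (\<Sum>\<alpha>\<in>S. a \<alpha> * cos (2 * pi * (\<Sum>i<n. real (\<alpha> ! i) * t i))
                               + b \<alpha> * sin (2 * pi * (\<Sum>i<n. real (\<alpha> ! i) * t i)))"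

end

theory Submission
  imports Defs "HOL-Computational_Algebra.Primes"
begin

lemma cis_sum: "cis (sum f A) = (\<Prod>x\<in>A. cis (f x))"
  by (induction A rule: infinite_finite_induct) (auto simp: cis_mult[symmetric])

lemma geo_zero:
  fixes p :: nat and g :: int
  assumes "p > 0" "\<not> int p dvd g"
  shows "(\<Sum>k<p. cis (2*pi*g*real k/p)) = 0"
proof -
  define w where "w = cis (2*pi*g/p)"
  have pw: "w ^ k = cis (2*pi*g*real k/p)" for k
  proof -
    have "w^k = cis (real k * (2*pi*g/p))" unfolding w_def by (rule Complex.DeMoivre)
    then show ?thesis by (simp add: field_simps)
  qed
  have "w ^ p = cis (2*pi*g)" using pw[of p] assms(1) by simp
  also have "\<dots> = 1" using cis_multiple_2pi[of "real_of_int g"] by simp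
  finally have wp: "w ^ p = 1" .
  have "w \<noteq> 1"
  proof
    assume "w = 1"
    then have "cos (2*pi*g/p) = 1" unfolding w_def by (metis cis.simps(1) one_complex.simps(1))
    then obtain m :: int where m: "2*pi*g/p = real_of_int m*2*pi" using cos_one_2pi_int by blast
    then have "real_of_int g = real_of_int m * real p" using assms(1) by (simp add: field_simps)
    then have "g = m * int p" by (metis of_int_eq_iff of_int_mult of_int_of_nat_eq)
    then show False using assms(2) by simp
  qed
  have "(\<Sum>k<p. cis (2*pi*g*real k/p)) = (\<Sum>k<p. w^k)" using pw by simp
  also have "\<dots> = 0" using \<open>w \<noteq> 1\<close> wp by (simp add: sum_gp_strict)
  finally show ?thesis .
qed

lemma char_sum:
  fixes p n :: nat and \<alpha> :: "nat list" and x :: "nat \<Rightarrow> real"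
  assumes "p > 0" "j < n" "\<not> p dvd (\<alpha>!j)"
  shows "(\<Sum>k\<in>PiE {..<n} (\<lambda>_. {..<p}). cis (2*pi*(\<Sum>i<n. real (\<alpha>!i) * (x i + real (k i)/p)))) = 0"
proof -
  define g where "g i \<kappa> = cis (2*pi*real (\<alpha>!i)*real \<kappa>/p)" for i \<kappa>
  define c where "c = (\<Prod>i<n. cis (2*pi*real (\<alpha>!i)*x i))"
  have eq: "cis (2*pi*(\<Sum>i<n. real (\<alpha>!i) * (x i + real (k i)/p))) = c * (\<Prod>i<n. g i (k i))" for k :: "nat \<Rightarrow> nat"
  proof -
    have "2*pi*(\<Sum>i<n. real (\<alpha>!i) * (x i + real (k i)/p)) = (\<Sum>i<n. 2*pi*real (\<alpha>!i)*x i + 2*pi*real (\<alpha>!i)*real (k i)/p)"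
      by (simp add: sum_distrib_left algebra_simps)
    then show ?thesis unfolding c_def g_def by (simp add: cis_sum cis_mult[symmetric] prod.distrib)
  qed
  have "(\<Sum>k\<in>PiE {..<n} (\<lambda>_. {..<p}). cis (2*pi*(\<Sum>i<n. real (\<alpha>!i) * (x i + real (k i)/p))))
      = c * (\<Sum>k\<in>PiE {..<n} (\<lambda>_. {..<p}). \<Prod>i<n. g i (k i))"
    by (subst sum_distrib_left) (rule sum.cong[OF refl], rule eq)
  also have "(\<Sum>k\<in>PiE {..<n} (\<lambda>_. {..<p}). \<Prod>i<n. g i (k i)) = (\<Prod>i<n. \<Sum>\<kappa><p. g i \<kappa>)"
    by (rule prod_sum_PiE[symmetric]) auto
  also have "\<dots> = 0"
  proof (rule prod_zero)
    have "(\<Sum>\<kappa><p. g j \<kappa>) = 0" unfolding g_def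
      using geo_zero[of p "int (\<alpha>!j)"] assms by simp
    then show "\<exists>i\<in>{..<n}. (\<Sum>\<kappa><p. g i \<kappa>) = 0" using assms by blast
  qed simp
  finally show ?thesis by simp
qed

lemma trig_periodic:
  fixes z w :: "nat \<Rightarrow> real"
  assumes "\<forall>i<n. \<exists>m::int. z i = w i + real_of_int m"
  shows "trig_poly n S a b z = trig_poly n S a b w"
  unfolding trig_poly_def
proof (rule sum.cong[OF refl])
  fix \<alpha> assume "\<alpha> \<in> S"
  obtain m where m: "\<forall>i<n. z i = w i + real_of_int (m i)"
    using assms by metis
  define N where "N = (\<Sum>i<n. int (\<alpha>!i) * m i)"
  have "2*pi*(\<Sum>i<n. real (\<alpha>!i) * z i) = 2*pi*(\<Sum>i<n. real (\<alpha>!i) * w i) + 2*pi * of_int N"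
    unfolding N_def using m by (simp add: algebra_simps sum.distrib sum_distrib_left)
  then show "a \<alpha> * cos (2*pi*(\<Sum>i<n. real (\<alpha>!i) * z i)) + b \<alpha> * sin (2*pi*(\<Sum>i<n. real (\<alpha>!i) * z i))
    = a \<alpha> * cos (2*pi*(\<Sum>i<n. real (\<alpha>!i) * w i)) + b \<alpha> * sin (2*pi*(\<Sum>i<n. real (\<alpha>!i) * w i))"
    by (simp add: cos_add sin_add)
qed

lemma frac_dist:
  fixes x0 z :: real
  assumes "0 \<le> x0" "x0 < 1"
  shows "min \<bar>x0 - frac z\<bar> (1 - \<bar>x0 - frac z\<bar>) \<le> \<bar>x0 - z\<bar>"
proof -
  have f: "frac z = z - of_int \<lfloor>z\<rfloor>" "0 \<le> frac z" "frac z < 1"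
    using floor_correct[of z] by (simp_all add: frac_def, linarith)
  consider "\<lfloor>z\<rfloor> = 0" | "\<lfloor>z\<rfloor> \<ge> 1" | "\<lfloor>z\<rfloor> \<le> -1" by linarith
  then show ?thesis
  proof cases
    case 1 then show ?thesis using f by simp
  next
    case 2 then have "real_of_int \<lfloor>z\<rfloor> \<ge> 1" by simp
    then show ?thesis using f assms by smt
  next
    case 3 then have "real_of_int \<lfloor>z\<rfloor> \<le> -1" by simp
    then show ?thesis using f assms by smt
  qed
qed


lemma trig_cont: "continuous_on A (\<lambda>s::real. trig_poly n S a b (\<lambda>i. x i + s * v i))"
  unfolding trig_poly_def by (intro continuous_intros)

lemma found:
  fixes x v :: "nat \<Rightarrow> real"
  assumes xt: "torus_pt n x" and s: "0 \<le> s" "s \<le> 1"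
    and F0: "trig_poly n S a b (\<lambda>i. x i + s * v i) = 0"
    and vR: "(\<Sum>i<n. (v i)^2) \<le> R"
  shows "\<exists>y. torus_pt n y \<and> torus_dist n x y \<le> sqrt R \<and> trig_poly n S a b y = 0"
proof -
  define z where "z i = x i + s * v i" for i
  define y where "y i = frac (z i)" for i
  have "torus_pt n y" unfolding torus_pt_def y_def by (simp add: frac_lt_1)
  moreover have "trig_poly n S a b y = trig_poly n S a b z"
  proof (rule trig_periodic, intro allI impI)
    fix i assume "i < n"
    show "\<exists>m::int. y i = z i + real_of_int m"
      by (rule exI[of _ "- \<lfloor>z i\<rfloor>"]) (simp add: y_def frac_def)
  qed
  then have "trig_poly n S a b y = 0" using F0 unfolding z_def by simp
  moreover have "torus_dist n x y \<le> sqrt R"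
    unfolding torus_dist_def
  proof (rule real_sqrt_le_mono, rule order_trans[OF sum_mono vR])
    fix i assume "i \<in> {..<n}"
    then have xi: "0 \<le> x i" "x i < 1" using xt unfolding torus_pt_def by auto
    have fr: "0 \<le> frac (z i)" "frac (z i) < 1" by (simp_all add: frac_lt_1)
    have m0: "0 \<le> min \<bar>x i - y i\<bar> (1 - \<bar>x i - y i\<bar>)" using xi fr unfolding y_def by smt
    have "min \<bar>x i - y i\<bar> (1 - \<bar>x i - y i\<bar>) \<le> \<bar>x i - z i\<bar>"
      unfolding y_def by (rule frac_dist[OF xi])
    also have "\<bar>x i - z i\<bar> = s * \<bar>v i\<bar>" using s unfolding z_def by (simp add: abs_mult)
    also have "\<dots> \<le> \<bar>v i\<bar>" using s by (simp add: mult_left_le_one_le)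
    finally have "(min \<bar>x i - y i\<bar> (1 - \<bar>x i - y i\<bar>))^2 \<le> \<bar>v i\<bar>^2"
      using m0 by (intro power_mono) auto
    then show "(min \<bar>x i - y i\<bar> (1 - \<bar>x i - y i\<bar>))^2 \<le> (v i)^2" by simp
  qed
  ultimately show ?thesis by blast
qed

lemma conclude:
  fixes x :: "nat \<Rightarrow> real" and v :: "'k \<Rightarrow> nat \<Rightarrow> real" and w :: "'k \<Rightarrow> real"
  assumes xt: "torus_pt n x" and I: "finite I" "I \<noteq> {}"
    and w: "\<forall>k\<in>I. w k > 0" and vR: "\<forall>k\<in>I. (\<Sum>i<n. (v k i)^2) \<le> R"
    and sum0: "(\<Sum>k\<in>I. w k * trig_poly n S a b (\<lambda>i. x i + v k i)) = 0"
  shows "\<exists>y. torus_pt n y \<and> torus_dist n x y \<le> sqrt R \<and> trig_poly n S a b y = 0"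
proof -
  define F where "F = trig_poly n S a b"
  define g where "g k s = F (\<lambda>i. x i + s * v k i)" for k s
  have g0: "g k 0 = F x" for k unfolding g_def by simp
  have g1: "g k 1 = F (\<lambda>i. x i + v k i)" for k unfolding g_def by simp
  have gc: "continuous_on {0..1} (g k)" for k unfolding g_def F_def by (rule trig_cont)
  obtain k0 where "k0 \<in> I" using I by blast
  consider "F x = 0" | "F x > 0" | "F x < 0" by linarith
  then show ?thesis
  proof cases
    case 1
    then have "g k0 0 = 0" using g0 by simp
    then show ?thesis using found[OF xt, of 0 S a b "v k0" R] vR \<open>k0 \<in> I\<close> unfolding g_def F_def by auto
  next
    case 2
    obtain k where k: "k \<in> I" "F (\<lambda>i. x i + v k i) \<le> 0"
    proof (rule ccontr)
      assume "\<not> thesis"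
      then have "\<forall>k\<in>I. F (\<lambda>i. x i + v k i) > 0" using that by force
      then have "(\<Sum>k\<in>I. w k * F (\<lambda>i. x i + v k i)) > 0" using w I by (intro sum_pos) auto
      then show False using sum0 unfolding F_def by simp
    qed
    obtain s where s: "0 \<le> s" "s \<le> 1" "g k s = 0"
      using IVT2'[of "g k" 1 0 0] gc g0 g1 k 2 by auto
    then show ?thesis using found[OF xt s(1,2), of S a b "v k" R] vR k unfolding g_def F_def by auto
  next
    case 3
    obtain k where k: "k \<in> I" "F (\<lambda>i. x i + v k i) \<ge> 0"
    proof (rule ccontr)
      assume "\<not> thesis"
      then have "\<forall>k\<in>I. F (\<lambda>i. x i + v k i) < 0" using that by force
      then have "\<forall>k\<in>I. - (w k * F (\<lambda>i. x i + v k i)) > 0" using w by (simp add: mult_pos_neg)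
      then have "(\<Sum>k\<in>I. - (w k * F (\<lambda>i. x i + v k i))) > 0" using I by (intro sum_pos) auto
      then show False using sum0 unfolding F_def by (simp add: sum_negf)
    qed
    obtain s where s: "0 \<le> s" "s \<le> 1" "g k s = 0"
      using IVT'[of "g k" 0 0 1] gc g0 g1 k 3 by auto
    then show ?thesis using found[OF xt s(1,2), of S a b "v k" R] vR k unfolding g_def F_def by auto
  qed
qed


lemma char_sum_real:
  fixes p n :: nat and \<alpha> :: "nat list" and x :: "nat \<Rightarrow> real"
  assumes "p > 0" "j < n" "\<not> p dvd (\<alpha>!j)"
  shows "(\<Sum>k\<in>PiE {..<n} (\<lambda>_. {..<p}). cos (2*pi*(\<Sum>i<n. real (\<alpha>!i) * (x i + real (k i)/p)))) = 0"
    and "(\<Sum>k\<in>PiE {..<n} (\<lambda>_. {..<p}). sin (2*pi*(\<Sum>i<n. real (\<alpha>!i) * (x i + real (k i)/p)))) = 0"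
proof -
  note c = char_sum[OF assms, of x]
  from arg_cong[OF c, of Re] show "(\<Sum>k\<in>PiE {..<n} (\<lambda>_. {..<p}). cos (2*pi*(\<Sum>i<n. real (\<alpha>!i) * (x i + real (k i)/p)))) = 0"
    by (simp add: Re_sum)
  from arg_cong[OF c, of Im] show "(\<Sum>k\<in>PiE {..<n} (\<lambda>_. {..<p}). sin (2*pi*(\<Sum>i<n. real (\<alpha>!i) * (x i + real (k i)/p)))) = 0"
    by (simp add: Im_sum)
qed

lemma bnd_alg: "(q::real) \<ge> 3 \<Longrightarrow> (n - 1)/4 + ((q-2)/(2*q))^2 - n*((q-1)/(2*q))^2 = ((n-2)*(2*q-1) + 2)/(4*q^2)"
  by (simp add: divide_simps power2_eq_square) (simp add: algebra_simps)

lemma case_big: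
  fixes n p :: nat and S :: "nat list set" and a b :: "nat list \<Rightarrow> real" and x :: "nat \<Rightarrow> real"
  assumes n2: "n \<ge> 2" and pp: "prime p" and p3: "p \<ge> 3" and fS: "finite S"
    and nd: "\<forall>\<alpha>\<in>S. \<exists>i<n. \<not> p dvd (\<alpha> ! i)" and xt: "torus_pt n x"
  shows "\<exists>y. torus_pt n y \<and> torus_dist n x y \<le> sqrt ((real n - 1) / 4 + ((real p - 2) / (2 * real p))^2)
                \<and> trig_poly n S a b y = 0"
proof -
  define R where "R = (real n - 1) / 4 + ((real p - 2) / (2 * real p))^2"
  define I where "I = PiE {..<n} (\<lambda>_. {..<p})"
  define v where "v k i = real (k i)/p - (if 2 * k i > p then 1 else 0)" for k :: "nat \<Rightarrow> nat" and i
  have p0: "p > 0" using p3 by simp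
  have oddp: "odd p" using prime_odd_nat[OF pp] p3 by simp
  have fI: "finite I" unfolding I_def by (simp add: finite_PiE)
  have neI: "I \<noteq> {}" unfolding I_def PiE_eq_empty_iff using p0 by (metis lessThan_iff empty_iff)
  have bnd: "R \<ge> real n * ((real p - 1) / (2 * real p))^2"
  proof -
    have pr: "real p \<ge> 3" "real n \<ge> 2" using p3 n2 by simp_all
    have "R - real n * ((real p - 1) / (2 * real p))^2
        = ((real n - 2) * (2 * real p - 1) + 2) / (4 * (real p)^2)"
      unfolding R_def using bnd_alg[OF pr(1), of "real n"] by simp
    also have "\<dots> \<ge> 0" using pr by (intro divide_nonneg_pos) auto
    finally show ?thesis by simp
  qed
  have vR: "\<forall>k\<in>I. (\<Sum>i<n. (v k i)^2) \<le> R"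
  proof
    fix k assume "k \<in> I"
    then have kp: "\<And>i. i < n \<Longrightarrow> k i < p" unfolding I_def by (auto simp: PiE_iff)
    have "(v k i)^2 \<le> ((real p - 1) / (2 * real p))^2" if "i < n" for i
    proof -
      have "\<bar>2 * real p * v k i\<bar> \<le> real p - 1"
      proof (cases "2 * k i > p")
        case True
        then have "2 * k i \<ge> p + 1" "k i + 1 \<le> p" using kp[OF that] by auto
        then have "real (2 * k i) \<ge> real p + 1" "real (k i) + 1 \<le> real p" by linarith+
        moreover have "2 * real p * v k i = 2 * real (k i) - 2 * real p" unfolding v_def using True p0 by (simp add: field_simps)
        ultimately show ?thesis by simp
      next
        case False
        moreover have "2 * k i \<noteq> p" using oddp by auto
        ultimately have "2 * k i \<le> p - 1" by linarith
        then have "real (2 * k i) \<le> real p - 1" using p0 by linarith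
        moreover have "2 * real p * v k i = 2 * real (k i)" unfolding v_def using False p0 by (simp add: field_simps)
        ultimately show ?thesis by simp
      qed
      then have "\<bar>v k i\<bar> \<le> (real p - 1) / (2 * real p)" using p0 by (simp add: field_simps abs_mult)
      then have "\<bar>v k i\<bar>^2 \<le> ((real p - 1) / (2 * real p))^2" by (intro power_mono) auto
      then show ?thesis by simp
    qed
    then have "(\<Sum>i<n. (v k i)^2) \<le> (\<Sum>i<n. ((real p - 1) / (2 * real p))^2)" by (intro sum_mono) auto
    also have "\<dots> = real n * ((real p - 1) / (2 * real p))^2" by simp
    finally show "(\<Sum>i<n. (v k i)^2) \<le> R" using bnd by linarith
  qed
  have per: "trig_poly n S a b (\<lambda>i. x i + v k i) = trig_poly n S a b (\<lambda>i. x i + real (k i)/p)" for k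
  proof (rule trig_periodic, intro allI impI)
    fix i assume "i < n"
    show "\<exists>m::int. x i + v k i = x i + real (k i) / real p + real_of_int m"
      by (rule exI[of _ "if 2 * k i > p then -1 else 0"]) (simp add: v_def)
  qed
  have "(\<Sum>k\<in>I. 1 * trig_poly n S a b (\<lambda>i. x i + v k i)) = (\<Sum>k\<in>I. trig_poly n S a b (\<lambda>i. x i + real (k i)/p))"
    using per by simp
  also have "\<dots> = (\<Sum>\<alpha>\<in>S. a \<alpha> * (\<Sum>k\<in>I. cos (2*pi*(\<Sum>i<n. real (\<alpha>!i) * (x i + real (k i)/p))))
                       + b \<alpha> * (\<Sum>k\<in>I. sin (2*pi*(\<Sum>i<n. real (\<alpha>!i) * (x i + real (k i)/p)))))"
    unfolding trig_poly_def by (subst sum.swap) (simp add: sum.distrib sum_distrib_left)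
  also have "\<dots> = 0"
  proof (rule sum.neutral, rule ballI)
    fix \<alpha> assume "\<alpha> \<in> S"
    then obtain j where "j < n" "\<not> p dvd \<alpha>!j" using nd by blast
    then show "a \<alpha> * (\<Sum>k\<in>I. cos (2*pi*(\<Sum>i<n. real (\<alpha>!i) * (x i + real (k i)/p))))
                       + b \<alpha> * (\<Sum>k\<in>I. sin (2*pi*(\<Sum>i<n. real (\<alpha>!i) * (x i + real (k i)/p)))) = 0"
      unfolding I_def using char_sum_real[OF p0, of j n \<alpha> x] by simp
  qed
  finally have "(\<Sum>k\<in>I. 1 * trig_poly n S a b (\<lambda>i. x i + v k i)) = 0" .
  from conclude[OF xt fI neI _ vR this] show ?thesis unfolding R_def by simp
qed


lemma wterm:
  fixes u t \<theta> :: real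
  shows "complex_of_real (1 - cos u) * cis (\<theta> + t) = cis \<theta> * (cis t - cis (t + u) / 2 - cis (t - u) / 2)"
  by (simp add: complex_eq_iff cos_add sin_add cos_diff sin_diff field_simps)

lemma wsum:
  fixes p :: nat and A B :: int and \<theta> :: real
  assumes "p > 0" "\<not> int p dvd A" "\<not> int p dvd (A + B)" "\<not> int p dvd (A - B)"
  shows "(\<Sum>k<p. complex_of_real (1 - cos (2*pi*B*real k/p)) * cis (\<theta> + 2*pi*A*real k/p)) = 0"
proof -
  have e: "complex_of_real (1 - cos (2*pi*B*real k/p)) * cis (\<theta> + 2*pi*A*real k/p)
     = cis \<theta> * (cis (2*pi*A*real k/p) - cis (2*pi * of_int (A+B)*real k/p) / 2 - cis (2*pi * of_int (A-B)*real k/p) / 2)" for k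
  proof -
    have "2*pi * of_int (A+B)*real k/p = 2*pi*A*real k/p + 2*pi*B*real k/p"
      "2*pi * of_int (A-B)*real k/p = 2*pi*A*real k/p - 2*pi*B*real k/p"
      by (simp_all add: algebra_simps add_divide_distrib diff_divide_distrib)
    then show ?thesis using wterm by simp
  qed
  have z0: "(\<Sum>k<p. cis (2*pi*A*real k/p)) = 0" using geo_zero[OF assms(1,2)] .
  have z1: "(\<Sum>k<p. cis (2*pi * of_int (A+B)*real k/p)) = 0" using geo_zero[OF assms(1,3)] .
  have z2: "(\<Sum>k<p. cis (2*pi * of_int (A-B)*real k/p)) = 0" using geo_zero[OF assms(1,4)] .
  show ?thesis
    unfolding e sum_distrib_left[symmetric] sum_subtractf sum_divide_distrib[symmetric] z0
    by (simp only: z1 z2) simp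
qed

lemma exists_beta:
  fixes p :: nat and S :: "nat list set"
  assumes "prime p" "finite S" "2 * card S + 2 \<le> p"
  shows "\<exists>\<beta>. 1 \<le> \<beta> \<and> \<beta> < p \<and> (\<forall>\<alpha>\<in>S. \<not> int p dvd (int (\<alpha>!0) + int \<beta>) \<and> \<not> int p dvd (int (\<alpha>!0) - int \<beta>))"
proof -
  define B1 where "B1 = (\<lambda>\<alpha>. nat ((- int (\<alpha>!0)) mod int p)) ` S"
  define B2 where "B2 = (\<lambda>\<alpha>. (\<alpha>!0) mod p) ` S"
  have "card (B1 \<union> B2) \<le> card B1 + card B2" by (rule card_Un_le)
  also have "\<dots> \<le> card S + card S" unfolding B1_def B2_def
    by (intro add_mono card_image_le assms(2))
  finally have cB: "card (B1 \<union> B2) < card {1..<p}" using assms(3) by simp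
  have "\<not> {1..<p} \<subseteq> B1 \<union> B2"
  proof
    assume "{1..<p} \<subseteq> B1 \<union> B2"
    then have "card {1..<p} \<le> card (B1 \<union> B2)" unfolding B1_def B2_def
      by (intro card_mono) (auto simp: assms(2))
    then show False using cB by simp
  qed
  then obtain \<beta> where b1: "\<beta> \<in> {1..<p}" "\<beta> \<notin> B1 \<union> B2" by blast
  then have \<beta>: "1 \<le> \<beta>" "\<beta> < p" "\<beta> \<notin> B1" "\<beta> \<notin> B2" by auto
  have "\<not> int p dvd (int (\<alpha>!0) + int \<beta>) \<and> \<not> int p dvd (int (\<alpha>!0) - int \<beta>)" if "\<alpha> \<in> S" for \<alpha>
  proof (intro conjI notI)
    assume "int p dvd (int (\<alpha>!0) + int \<beta>)"
    then obtain q where q: "int (\<alpha>!0) + int \<beta> = int p * q" by (auto simp: dvd_def)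
    have "int \<beta> = int \<beta> mod int p" using \<beta> by simp
    also have "\<dots> = (- int (\<alpha>!0) + int p * q) mod int p"
    proof -
      have e: "- int (\<alpha>!0) + int p * q = int \<beta>" using q by linarith
      show ?thesis by (simp only: e)
    qed
    also have "\<dots> = (- int (\<alpha>!0)) mod int p" by (rule mod_mult_self2)
    finally have "\<beta> = nat ((- int (\<alpha>!0)) mod int p)" by linarith
    then show False using \<beta>(3) that unfolding B1_def by blast
  next
    assume "int p dvd (int (\<alpha>!0) - int \<beta>)"
    then obtain q where q: "int (\<alpha>!0) - int \<beta> = int p * q" by (auto simp: dvd_def)
    have "int \<beta> = int \<beta> mod int p" using \<beta> by simp
    also have "\<dots> = (int (\<alpha>!0) + int p * (- q)) mod int p"
    proof -
      have e: "int (\<alpha>!0) + int p * (- q) = int \<beta>" using q by linarith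
      show ?thesis by (simp only: e)
    qed
    also have "\<dots> = int (\<alpha>!0) mod int p" by (rule mod_mult_self2)
    also have "\<dots> = int ((\<alpha>!0) mod p)" by (simp add: zmod_int)
    finally have "\<beta> = (\<alpha>!0) mod p" by linarith
    then show False using \<beta>(4) that unfolding B2_def by blast
  qed
  then show ?thesis using \<beta> by blast
qed


lemma trig1: "trig_poly 1 S a b z = (\<Sum>\<alpha>\<in>S. a \<alpha> * cos (2*pi*(real (\<alpha>!0) * z 0)) + b \<alpha> * sin (2*pi*(real (\<alpha>!0) * z 0)))"
  unfolding trig_poly_def by simp

lemma case_one:
  fixes p :: nat and S :: "nat list set" and a b :: "nat list \<Rightarrow> real" and x :: "nat \<Rightarrow> real"
  assumes pp: "prime p" and p3: "p \<ge> 3" and fS: "finite S"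
    and nd: "\<forall>\<alpha>\<in>S. \<not> p dvd (\<alpha> ! 0)" and cS: "2 * card S + 2 \<le> p" and xt: "torus_pt 1 x"
  shows "\<exists>y. torus_pt 1 y \<and> torus_dist 1 x y \<le> sqrt ((real 1 - 1) / 4 + ((real p - 2) / (2 * real p))^2)
                \<and> trig_poly 1 S a b y = 0"
proof -
  obtain \<beta> where \<beta>: "1 \<le> \<beta>" "\<beta> < p" "\<forall>\<alpha>\<in>S. \<not> int p dvd (int (\<alpha>!0) + int \<beta>) \<and> \<not> int p dvd (int (\<alpha>!0) - int \<beta>)"
    using exists_beta[OF pp fS cS] by blast
  define R where "R = (real 1 - 1) / 4 + ((real p - 2) / (2 * real p))^2"
  define I where "I = {1..<p}"
  define w where "w k = 1 - cos (2*pi*real \<beta>*real k/p)" for k :: nat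
  define v where "v k i = real k/p - 1/2" for k :: nat and i :: nat
  have p0: "p > 0" using p3 by simp
  have fI: "finite I" "I \<noteq> {}" unfolding I_def using p3 by auto
  have wpos: "\<forall>k\<in>I. w k > 0"
  proof
    fix k assume "k \<in> I"
    then have k: "1 \<le> k" "k < p" unfolding I_def by auto
    have "cos (2*pi*real \<beta>*real k/p) \<noteq> 1"
    proof
      assume "cos (2*pi*real \<beta>*real k/p) = 1"
      then obtain m :: int where m: "2*pi*real \<beta>*real k/p = real_of_int m * 2 * pi"
        using cos_one_2pi_int by blast
      then have "real \<beta> * real k = real_of_int m * real p" using p0 by (simp add: field_simps)
      then have "int (\<beta> * k) = m * int p" by (metis of_int_eq_iff of_int_mult of_int_of_nat_eq of_nat_mult)
      then have "int p dvd int (\<beta> * k)" by simp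
      then have "p dvd \<beta> * k" by presburger
      then have "p dvd \<beta> \<or> p dvd k" using pp prime_dvd_mult_iff by blast
      then show False using \<beta>(1,2) k by (auto dest: dvd_imp_le)
    qed
    moreover have "cos (2*pi*real \<beta>*real k/p) \<le> 1" by simp
    ultimately show "w k > 0" unfolding w_def by linarith
  qed
  have vR: "\<forall>k\<in>I. (\<Sum>i<1. (v k i)^2) \<le> R"
  proof
    fix k assume "k \<in> I"
    then have k: "1 \<le> real k" "real k + 1 \<le> real p" unfolding I_def by auto
    have e: "real k/p - 1/2 = (2 * real k - real p) / (2 * real p)" using p0 by (simp add: field_simps)
    have "\<bar>2 * real k - real p\<bar> \<le> real p - 2" using k by (simp add: abs_le_iff)
    then have "\<bar>2 * real k - real p\<bar> / (2 * real p) \<le> (real p - 2) / (2 * real p)"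
      using p0 by (intro divide_right_mono) auto
    then have "\<bar>real k/p - 1/2\<bar> \<le> (real p - 2) / (2 * real p)" unfolding e using p0 by (simp add: abs_divide)
    then have "\<bar>real k/p - 1/2\<bar>^2 \<le> ((real p - 2) / (2 * real p))^2" by (intro power_mono) auto
    then show "(\<Sum>i<1. (v k i)^2) \<le> R" unfolding R_def v_def by simp
  qed
  have Geq: "2*pi*(real (\<alpha>!0) * (x 0 + v k 0)) = 2*pi*real (\<alpha>!0)*(x 0 - 1/2) + 2*pi*real_of_int (int (\<alpha>!0))*real k/p" for \<alpha> k
    unfolding v_def by (simp add: algebra_simps add_divide_distrib)
  have z: "(\<Sum>k<p. w k * cos (2*pi*real (\<alpha>!0)*(x 0 - 1/2) + 2*pi*real_of_int (int (\<alpha>!0))*real k/p)) = 0 \<and>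
           (\<Sum>k<p. w k * sin (2*pi*real (\<alpha>!0)*(x 0 - 1/2) + 2*pi*real_of_int (int (\<alpha>!0))*real k/p)) = 0"
    if "\<alpha> \<in> S" for \<alpha>
  proof -
    have "\<not> int p dvd int (\<alpha>!0)" using nd that by simp
    note ws = wsum[OF p0 this, of "int \<beta>" "2*pi*real (\<alpha>!0)*(x 0 - 1/2)"]
    have c: "(\<Sum>k<p. complex_of_real (1 - cos (2*pi*real_of_int (int \<beta>)*real k/p)) * cis (2*pi*real (\<alpha>!0)*(x 0 - 1/2) + 2*pi*real_of_int (int (\<alpha>!0))*real k/p)) = 0"
      using ws \<beta>(3) that by simp
    from arg_cong[OF c, of Re] arg_cong[OF c, of Im] show ?thesis
      unfolding w_def by (simp_all add: Re_sum Im_sum)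
  qed
  have "(\<Sum>k\<in>I. w k * trig_poly 1 S a b (\<lambda>i. x i + v k i)) = (\<Sum>k<p. w k * trig_poly 1 S a b (\<lambda>i. x i + v k i))"
  proof -
    have "{..<p} = insert 0 I" unfolding I_def using p0 by auto
    then show ?thesis unfolding I_def using w_def by (simp add: w_def)
  qed
  also have "\<dots> = (\<Sum>\<alpha>\<in>S. a \<alpha> * (\<Sum>k<p. w k * cos (2*pi*real (\<alpha>!0)*(x 0 - 1/2) + 2*pi*real_of_int (int (\<alpha>!0))*real k/p))
      + b \<alpha> * (\<Sum>k<p. w k * sin (2*pi*real (\<alpha>!0)*(x 0 - 1/2) + 2*pi*real_of_int (int (\<alpha>!0))*real k/p)))"
  proof -
    have "(\<Sum>k<p. w k * trig_poly 1 S a b (\<lambda>i. x i + v k i)) = (\<Sum>k<p. \<Sum>\<alpha>\<in>S. w k * (a \<alpha> * cos (2*pi*(real (\<alpha>!0) * (x 0 + v k 0))) + b \<alpha> * sin (2*pi*(real (\<alpha>!0) * (x 0 + v k 0)))))"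
      unfolding trig1 by (simp add: sum_distrib_left)
    also have "\<dots> = (\<Sum>\<alpha>\<in>S. \<Sum>k<p. w k * (a \<alpha> * cos (2*pi*(real (\<alpha>!0) * (x 0 + v k 0))) + b \<alpha> * sin (2*pi*(real (\<alpha>!0) * (x 0 + v k 0)))))"
      by (rule sum.swap)
    finally show ?thesis unfolding Geq by (simp add: sum.distrib sum_distrib_left algebra_simps)
  qed
  also have "\<dots> = 0" using z by (intro sum.neutral) simp
  finally have "(\<Sum>k\<in>I. w k * trig_poly 1 S a b (\<lambda>i. x i + v k i)) = 0" .
  from conclude[OF xt fI(1) fI(2) wpos vR this] show ?thesis unfolding R_def .
qed


theorem theorem1p2:
  fixes n p :: nat and S :: "nat list set" and a b :: "nat list \<Rightarrow> real"
  assumes "n \<ge> 1" and "prime p" and "p \<ge> 3"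
    and "finite S"
    and "\<forall>\<alpha>\<in>S. length \<alpha> = n \<and> \<alpha> \<noteq> replicate n 0"
    and "real (card S) \<le> (real p ^ n) / 2 - 1"
    and "\<forall>\<alpha>\<in>S. \<exists>i<n. \<not> p dvd (\<alpha> ! i)"
  shows "\<forall>x. torus_pt n x \<longrightarrow>
           (\<exists>y. torus_pt n y
                \<and> torus_dist n x y \<le> sqrt ((real n - 1) / 4 + ((real p - 2) / (2 * real p))^2)
                \<and> trig_poly n S a b y = 0)"
proof (intro allI impI)
  fix x assume xt: "torus_pt n x"
  show "\<exists>y. torus_pt n y
                \<and> torus_dist n x y \<le> sqrt ((real n - 1) / 4 + ((real p - 2) / (2 * real p))^2)
                \<and> trig_poly n S a b y = 0"
  proof (cases "n = 1")
    case True
    have nd: "\<forall>\<alpha>\<in>S. \<not> p dvd (\<alpha> ! 0)" using assms(7) True by auto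
    have "real (2 * card S + 2) \<le> real p" using assms(6) True by simp
    then have cS: "2 * card S + 2 \<le> p" by linarith
    show ?thesis unfolding True
      by (rule case_one[OF assms(2,3,4) nd cS xt[unfolded True]])
  next
    case False
    then have "n \<ge> 2" using assms(1) by simp
    then show ?thesis using case_big[OF _ assms(2,3,4,7) xt] by blast
  qed
qed

end
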